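(* Let $q$ be a prime power, $n\geq 1$, and $c\in\mathbb{F}_q\setminus\{1\}$. Let $f_1,\ldots,f_n:\mathbb{F}_q\to\mathbb{F}_q$ be perfect $c$-nonlinear functions. Let $\{\beta_1,\ldots,\beta_n\}$ be a basis of $\mathbb{F}_{q^n}$ over $\mathbb{F}_q$, let $A$ be the $n\times n$ matrix with $(i,j)$ entry $\beta_i^{q^{j-1}}$, write $A^{-1}=(a_{i,j})_{i,j}$, and for $1\leq k\leq n$ let $L_k(x)=\sum_{i=1}^n a_{i,k}x^{q^{i-1}}$. Then $F:\mathbb{F}_{q^n}\to\mathbb{F}_{q^n}$, $F(x)=\sum_{k=1}^n\beta_k f_k(L_k(x))$, is perfect $c$-nonlinear.
   Context: For a finite field $K$, a function $h:K\to K$ and $c\in K$, let ${}_c\Delta_h(a,b)=\#\{x\in K: h(x+a)-ch(x)=b\}$ and the $c$-differential uniformity is $\delta_{h,c}=\max\{{}_c\Delta_h(a,b): a,b\in K,\ a\neq 0\text{ if } c=1\}$. $h$ is perfect $c$-nonlinear (PcN) if $\delta_{h,c}=1$. *)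

theory Defs
  imports "HOL-Computational_Algebra.Primes" "HOL-Library.FuncSet"
begin

definition cDelta :: "'a::field set \<Rightarrow> ('a \<Rightarrow> 'a) \<Rightarrow> 'a \<Rightarrow> 'a \<Rightarrow> 'a \<Rightarrow> nat" where
  "cDelta K h c a b = card {x \<in> K. h (x + a) - c * h x = b}"

definition c_diff_unif :: "'a::field set \<Rightarrow> ('a \<Rightarrow> 'a) \<Rightarrow> 'a \<Rightarrow> nat" where
  "c_diff_unif K h c = Max {cDelta K h c a b | a b. a \<in> K \<and> b \<in> K \<and> (c = 1 \<longrightarrow> a \<noteq> 0)}"

definition PcN :: "'a::field set \<Rightarrow> ('a \<Rightarrow> 'a) \<Rightarrow> 'a \<Rightarrow> bool" where
  "PcN K h c \<longleftrightarrow> c_diff_unif K h c = 1"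

text \<open>The subfield F_q of a finite field: the set of roots of x^q - x.\<close>
definition subfield_q :: "nat \<Rightarrow> 'a::field set" where
  "subfield_q q = {x. x ^ q = x}"

definition is_basis_over :: "'a::field set \<Rightarrow> nat \<Rightarrow> (nat \<Rightarrow> 'a) \<Rightarrow> bool" where
  "is_basis_over K n \<beta> \<longleftrightarrow>
     (\<forall>y. \<exists>!l. l \<in> {1..n} \<rightarrow>\<^sub>E K \<and> y = (\<Sum>i=1..n. l i * \<beta> i))"

end

theory Submission imports Defs begin

lemma card_times_zero:
  fixes a :: "'b::{field,finite}"
  shows "of_nat (card (UNIV::'b set)) * a = 0"
proof -
  have "(\<Sum>y\<in>UNIV. y + a) = (\<Sum>y\<in>(UNIV::'b set). y)"
    by (rule sum.reindex_bij_witness[of _ "\<lambda>y. y - a" "\<lambda>y. y + a"]) auto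
  then show ?thesis by (simp add: sum.distrib)
qed

lemma char_eq:
  assumes "prime p" "k > 0" "card (UNIV :: 'b::{field,finite} set) = (p^k)^n" "n \<ge> 1"
  shows "CHAR('b) = p"
proof -
  have "of_nat ((p^k)^n) = (0::'b)" using card_times_zero[of "1::'b"] assms(3) by simp
  hence d: "CHAR('b) dvd p^(k*n)" by (metis of_nat_eq_0_iff_char_dvd power_mult)
  have pc: "prime CHAR('b)"
    using finite_imp_CHAR_pos[where ?'a='b] prime_CHAR_semidom by auto
  have "CHAR('b) dvd p" using prime_dvd_power[OF pc d] .
  thus ?thesis using pc assms(1) by (simp add: primes_dvd_imp_eq)
qed


theorem corollary3p2:
  fixes q n :: nat and c :: "'b::{field,finite}"
    and f :: "nat \<Rightarrow> 'b \<Rightarrow> 'b" and \<beta> :: "nat \<Rightarrow> 'b" and a :: "nat \<Rightarrow> nat \<Rightarrow> 'b"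
  assumes q_pp: "\<exists>p k. prime p \<and> k > 0 \<and> q = p ^ k"
    and n_pos: "n \<ge> 1"
    and card_field: "card (UNIV :: 'b set) = q ^ n"
    and c_in: "c \<in> subfield_q q" and c_ne: "c \<noteq> 1"
    and f_maps: "\<forall>k\<in>{1..n}. \<forall>x\<in>subfield_q q. f k x \<in> subfield_q q"
    and f_PcN: "\<forall>k\<in>{1..n}. PcN (subfield_q q) (f k) c"
    and basis: "is_basis_over (subfield_q q) n \<beta>"
    and inv_right: "\<forall>i\<in>{1..n}. \<forall>j\<in>{1..n}.
        (\<Sum>m=1..n. \<beta> i ^ (q ^ (m - 1)) * a m j) = (if i = j then 1 else 0)"
    and inv_left: "\<forall>i\<in>{1..n}. \<forall>j\<in>{1..n}.
        (\<Sum>m=1..n. a i m * \<beta> m ^ (q ^ (j - 1))) = (if i = j then 1 else 0)"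
  shows "PcN UNIV
           (\<lambda>x. \<Sum>k=1..n. \<beta> k * f k (\<Sum>i=1..n. a i k * x ^ (q ^ (i - 1)))) c"
proof -
  define K where "K = (subfield_q q :: 'b set)"
  obtain p e where pe: "prime p" "e > 0" "q = p ^ e" using q_pp by blast
  have CH: "CHAR('b) = p" using char_eq[of p e n] pe n_pos card_field by simp
  have pc: "prime CHAR('b)" using CH pe by simp
  have qj: "q ^ j = CHAR('b) ^ (e * j)" for j using CH pe by (simp add: power_mult)
  have frob_add: "(x + y) ^ (q ^ j) = x ^ (q ^ j) + y ^ (q ^ j)" for x y :: 'b and j
    using freshmans_dream'[OF pc qj[of j]] .
  have frob_sum: "(sum g A) ^ (q ^ j) = (\<Sum>i\<in>A. g i ^ (q ^ j))" for g :: "nat \<Rightarrow> 'b" and A j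
    using freshmans_dream_sum'[OF pc qj[of j]] .
  have Kpow: "x ^ (q ^ j) = x" if "x \<in> K" for x j
  proof (induction j)
    case 0 then show ?case by simp
  next
    case (Suc j)
    have "x ^ (q ^ Suc j) = (x ^ q) ^ (q ^ j)" by (simp add: power_mult)
    also have "x ^ q = x" using that by (simp add: K_def subfield_q_def)
    finally show ?case using Suc by simp
  qed
  have Kmult: "x * y \<in> K" if "x \<in> K" "y \<in> K" for x y
    using that by (simp add: K_def subfield_q_def power_mult_distrib)
  have Kdiff: "x - y \<in> K" if "x \<in> K" "y \<in> K" for x y
  proof -
    have "x ^ q = ((x - y) + y) ^ (q ^ 1)" by simp
    also have "\<dots> = (x - y) ^ q + y ^ q" using frob_add[of "x - y" y 1] by simp
    finally show ?thesis using that by (simp add: K_def subfield_q_def eq_diff_eq)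
  qed
  define L where "L k x = (\<Sum>i=1..n. a i k * x ^ (q ^ (i - 1)))" for k and x :: 'b
  have uniq: "\<forall>k\<in>{1..n}. u k = v k"
    if "\<forall>k\<in>{1..n}. u k \<in> K \<and> v k \<in> K" "(\<Sum>k=1..n. u k * \<beta> k) = (\<Sum>k=1..n. v k * \<beta> k)"
    for u v
  proof -
    obtain y where y: "y = (\<Sum>k=1..n. u k * \<beta> k)" by blast
    have "\<exists>!l. l \<in> {1..n} \<rightarrow>\<^sub>E K \<and> y = (\<Sum>i=1..n. l i * \<beta> i)"
      using basis unfolding is_basis_over_def K_def by blast
    moreover have "restrict u {1..n} \<in> {1..n} \<rightarrow>\<^sub>E K \<and> y = (\<Sum>i=1..n. restrict u {1..n} i * \<beta> i)"
      using that y by auto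
    moreover have "restrict v {1..n} \<in> {1..n} \<rightarrow>\<^sub>E K \<and> y = (\<Sum>i=1..n. restrict v {1..n} i * \<beta> i)"
      using that y by auto
    ultimately have "restrict u {1..n} = restrict v {1..n}" by blast
    then show ?thesis by (metis restrict_apply')
  qed
  have decomp: "(\<forall>j\<in>{1..n}. L j x \<in> K) \<and> x = (\<Sum>k=1..n. \<beta> k * L k x)" for x
  proof -
    obtain l where l: "l \<in> {1..n} \<rightarrow>\<^sub>E K" "x = (\<Sum>i=1..n. l i * \<beta> i)"
      using basis unfolding is_basis_over_def K_def by blast
    have Lj: "L j x = l j" if j: "j \<in> {1..n}" for j
    proof -
      have "L j x = (\<Sum>i=1..n. a i j * (\<Sum>m=1..n. l m * \<beta> m ^ (q ^ (i - 1))))"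
        unfolding L_def l(2) frob_sum
        apply (intro sum.cong refl arg_cong2[where f="(*)"] sum.cong)
        using l(1) by (auto simp: power_mult_distrib PiE_iff Kpow)
      also have "\<dots> = (\<Sum>m=1..n. l m * (\<Sum>i=1..n. \<beta> m ^ (q ^ (i - 1)) * a i j))"
        by (simp add: sum_distrib_left sum_distrib_right mult_ac) (rule sum.swap)
      also have "\<dots> = (\<Sum>m=1..n. l m * (if m = j then 1 else 0))"
        using inv_right j by (intro sum.cong) auto
      also have "\<dots> = l j" using j by (simp add: if_distrib cong: if_cong)
      finally show ?thesis .
    qed
    show ?thesis
    proof
      show "\<forall>j\<in>{1..n}. L j x \<in> K" using Lj l(1) by auto
      show "x = (\<Sum>k=1..n. \<beta> k * L k x)" using l(2) Lj by (simp add: mult.commute)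
    qed
  qed
  have Ladd: "L k (x + y) = L k x + L k y" for k x y
    unfolding L_def by (simp add: frob_add distrib_left sum.distrib)
  define F where "F x = (\<Sum>k=1..n. \<beta> k * f k (L k x))" for x
  have finK: "finite {cDelta K (f k) c a0 b0 | a0 b0. a0 \<in> K \<and> b0 \<in> K \<and> (c = 1 \<longrightarrow> a0 \<noteq> 0)}" for k
  proof -
    have "{cDelta K (f k) c a0 b0 | a0 b0. a0 \<in> K \<and> b0 \<in> K \<and> (c = 1 \<longrightarrow> a0 \<noteq> 0)}
       \<subseteq> (\<lambda>(a0, b0). cDelta K (f k) c a0 b0) ` UNIV" by auto
    then show ?thesis by (rule finite_subset) simp
  qed
  have fk_le: "cDelta K (f k) c a0 b0 \<le> 1" if "k \<in> {1..n}" "a0 \<in> K" "b0 \<in> K" for k a0 b0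
  proof -
    have "cDelta K (f k) c a0 b0 \<le> Max {cDelta K (f k) c a0 b0 | a0 b0. a0 \<in> K \<and> b0 \<in> K \<and> (c = 1 \<longrightarrow> a0 \<noteq> 0)}"
      using that c_ne by (intro Max_ge[OF finK]) blast
    also have "\<dots> = 1" using f_PcN that unfolding PcN_def c_diff_unif_def K_def by blast
    finally show ?thesis .
  qed
  have le1: "cDelta UNIV F c a0 b0 \<le> 1" for a0 b0
  proof -
    let ?S = "{x \<in> UNIV. F (x + a0) - c * F x = b0}"
    have "\<forall>x1\<in>?S. \<forall>x2\<in>?S. x1 = x2"
    proof (intro ballI)
      fix x1 x2 assume x1: "x1 \<in> ?S" and x2: "x2 \<in> ?S"
      have sol: "L k x \<in> {u \<in> K. f k (u + L k a0) - c * f k u = L k b0}"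
        if "x \<in> ?S" "k \<in> {1..n}" for x k
      proof -
        define g where "g k = f k (L k x + L k a0) - c * f k (L k x)" for k
        have gK: "\<forall>k\<in>{1..n}. g k \<in> K"
        proof
          fix k assume k: "k \<in> {1..n}"
          have "L k x + L k a0 \<in> K" using decomp[of "x + a0"] k by (simp add: Ladd)
          moreover have "L k x \<in> K" using decomp[of x] k by simp
          ultimately show "g k \<in> K" unfolding g_def using f_maps c_in k
            by (intro Kdiff Kmult) (auto simp: K_def)
        qed
        have "b0 = F (x + a0) - c * F x" using that by simp
        also have "\<dots> = (\<Sum>k=1..n. g k * \<beta> k)"
        proof -
          have "c * F x = (\<Sum>k=1..n. c * (\<beta> k * f k (L k x)))" by (simp add: F_def sum_distrib_left)
          then have "F (x + a0) - c * F x = (\<Sum>k=1..n. \<beta> k * f k (L k x + L k a0) - c * (\<beta> k * f k (L k x)))"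
            by (simp only: F_def Ladd sum_subtractf)
          also have "\<dots> = (\<Sum>k=1..n. g k * \<beta> k)"
            by (rule sum.cong) (simp_all add: g_def right_diff_distrib left_diff_distrib mult_ac)
          finally show ?thesis .
        qed
        finally have "(\<Sum>k=1..n. g k * \<beta> k) = (\<Sum>k=1..n. L k b0 * \<beta> k)"
          using decomp[of b0] by (simp add: mult.commute)
        then have "\<forall>k\<in>{1..n}. g k = L k b0"
          using uniq[of g "\<lambda>k. L k b0"] gK decomp by blast
        then show ?thesis using that decomp g_def by auto
      qed
      have "L k x1 = L k x2" if k: "k \<in> {1..n}" for k
      proof -
        let ?T = "{u \<in> K. f k (u + L k a0) - c * f k u = L k b0}"
        have "cDelta K (f k) c (L k a0) (L k b0) \<le> 1" using fk_le[of k "L k a0" "L k b0"] k decomp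
          by blast
        then have c1: "card ?T \<le> Suc 0" unfolding cDelta_def by simp
        have fin: "finite ?T" by simp
        have "\<forall>u1\<in>?T. \<forall>u2\<in>?T. u1 = u2" using c1 card_le_Suc0_iff_eq[OF fin] by blast
        then show ?thesis using sol[OF x1 k] sol[OF x2 k] by blast
      qed
      then have "(\<Sum>k=1..n. \<beta> k * L k x1) = (\<Sum>k=1..n. \<beta> k * L k x2)"
        by (intro sum.cong) auto
      then show "x1 = x2" using decomp[of x1] decomp[of x2] by simp
    qed
    moreover have fin: "finite ?S" by simp
    ultimately have "card ?S \<le> Suc 0" using card_le_Suc0_iff_eq[OF fin] by blast
    then show ?thesis unfolding cDelta_def by simp
  qed
  let ?M = "{cDelta UNIV F c a0 b0 | a0 b0. a0 \<in> UNIV \<and> b0 \<in> UNIV \<and> (c = 1 \<longrightarrow> a0 \<noteq> 0)}"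
  have one: "cDelta UNIV F c 0 (F 0 - c * F 0) = 1"
  proof -
    let ?S0 = "{x \<in> UNIV. F (x + 0) - c * F x = F 0 - c * F 0}"
    have "0 \<in> ?S0" by simp
    then have ne: "?S0 \<noteq> {}" by blast
    have fin: "finite ?S0" by simp
    have "card ?S0 > 0" using card_gt_0_iff ne fin by blast
    then have "cDelta UNIV F c 0 (F 0 - c * F 0) \<ge> 1"
      unfolding cDelta_def by linarith
    then show ?thesis using le1 by (meson le_antisym)
  qed
  have "Max ?M = 1"
  proof (rule Max_eqI)
    have "?M \<subseteq> (\<lambda>(a0, b0). cDelta UNIV F c a0 b0) ` UNIV" by auto
    then show "finite ?M" by (rule finite_subset) simp
    show "y \<le> 1" if "y \<in> ?M" for y using that le1 by auto
    show "1 \<in> ?M" using c_ne by (intro CollectI exI[of _ 0] exI[of _ "F 0 - c * F 0"]) (simp add: one)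
  qed
  then show ?thesis unfolding PcN_def c_diff_unif_def F_def L_def .
qed

end
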